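(* Let $\mathcal{A},\mathcal{B}\in\mathbb{S}^{[m,n]}$ with $\mathcal{B}$ positive definite, let $\lambda(x)=\mathcal{A}x^m/\mathcal{B}x^m$, $g(x)=\nabla\lambda(x)$, $\Omega=\mathbb{S}^{n-1}_+=\{x\in\mathbb{R}^n:x^Tx=1,x\ge0\}$, and let $P_\Omega$ be a Euclidean projection onto $\Omega$. Fix constants $\rho\in(0,1)$ and $0<\beta_{\min}\le\beta_{\max}$. Let $\{x_k\}$ be generated by the following algorithm (SPG1): choose $x_0\in\Omega$, $\beta_0=1/\|g(x_0)\|$; at iteration $k$, with $g_k=g(x_k)$: (1) compute $z_k=P_\Omega(x_k+\beta_k g_k)$ and $d_k=z_k-x_k$; (2) if $d_k=0$ stop; otherwise set $\alpha=1$; (3) while $\lambda(x_k+\alpha d_k)<\lambda(x_k)+\rho\alpha g_k^Td_k$, replace $\alpha$ by $\alpha/2$; then set $\alpha_k=\alpha$, $x_{k+1}=x_k+\alpha_kd_k$, $s_k=x_{k+1}-x_k$, $y_k=g_{k+1}-g_k$; (4) if $b_k=\langle s_k,y_k\rangle\le0$ set $\beta_{k+1}=\beta_{\max}$, else $\beta_{k+1}=\max\{\beta_{\min},\min\{\beta_{\max},\langle s_k,s_k\rangle/b_k\}\}$. Then: if the algorithm stops at some $x_k$ (i.e. $d_k=0$), $(\lambda(x_k),x_k)$ is a solution of the TEiCP for $(\mathcal{A},\mathcal{B})$; otherwise every accumulation point $x^*$ of $\{x_k\}$ is a constrained stationary point of the problem $\max\{\lambda(x):x\in\Omega\}$ (so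 that $(\lambda(x^* ),x^* )$ solves the TEiCP), and the sequence $\{\lambda(x_k)\}$ converges to a Pareto eigenvalue of $(\mathcal{A},\mathcal{B})$.
   Context: $\mathbb{S}^{[m,n]}$ is the set of real symmetric $m$th-order $n$-dimensional tensors; $(\mathcal{A}x^{m-1})_i=\sum_{i_2,\dots,i_m=1}^n a_{i i_2\cdots i_m}x_{i_2}\cdots x_{i_m}$, $\mathcal{A}x^m=x^T(\mathcal{A}x^{m-1})$; $\mathcal{B}$ positive definite means $\mathcal{B}x^m>0$ for $x\ne0$. The gradient is $g(x)=\frac{m}{\mathcal{B}x^m}\bigl(\mathcal{A}x^{m-1}-\lambda(x)\mathcal{B}x^{m-1}\bigr)$. The TEiCP for $(\mathcal{A},\mathcal{B})$ asks for $\lambda\in\mathbb{R}$ and $x\in\mathbb{R}^n\setminus\{0\}$ with $x\ge0$, $(\lambda\mathcal{B}-\mathcal{A})x^{m-1}\ge0$, $\langle x,(\lambda\mathcal{B}-\mathcal{A})x^{m-1}\rangle=0$; such $\lambda$ is a Pareto eigenvalue and $x$ a Pareto eigenvector. A constrained stationary point of $\max\{\lambda(x):x\in\Omega\}$ is a point $x\in\Omega$ satisfying the KKT conditions: there exist $\mu\in\mathbb{R}$, $v\in\mathbb{R}^n$ with $\nabla\lambda(x)+2\mu x+v=0$, $v\ge0$, $v^Tx=0$. *)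

theory Defs
  imports "HOL-Analysis.Analysis" "HOL-Library.Multiset"
begin

text \<open>An m-th order n-dimensional real tensor is a function from index lists
 (of length m, over the finite index type 'n) to reals.\<close>

definition sym_tensor :: "nat \<Rightarrow> ('n::finite list \<Rightarrow> real) \<Rightarrow> bool" where
  "sym_tensor m A \<longleftrightarrow> (\<forall>is js. length is = m \<and> mset is = mset js \<longrightarrow> A is = A js)"

definition tvec :: "nat \<Rightarrow> ('n::finite list \<Rightarrow> real) \<Rightarrow> real^'n \<Rightarrow> real^'n" where
  "tvec m A x = (\<chi> i. \<Sum>js\<in>{js::'n list. length js = m - 1}.
       A (i # js) * prod_list (map (\<lambda>j. x $ j) js))"

definition tform :: "nat \<Rightarrow> ('n::finite list \<Rightarrow> real) \<Rightarrow> real^'n \<Rightarrow> real" where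
  "tform m A x = x \<bullet> tvec m A x"

definition pos_def_tensor :: "nat \<Rightarrow> ('n::finite list \<Rightarrow> real) \<Rightarrow> bool" where
  "pos_def_tensor m B \<longleftrightarrow> (\<forall>x. x \<noteq> 0 \<longrightarrow> tform m B x > 0)"

definition lam :: "nat \<Rightarrow> ('n::finite list \<Rightarrow> real) \<Rightarrow> ('n list \<Rightarrow> real) \<Rightarrow> real^'n \<Rightarrow> real" where
  "lam m A B x = tform m A x / tform m B x"

definition grad :: "nat \<Rightarrow> ('n::finite list \<Rightarrow> real) \<Rightarrow> ('n list \<Rightarrow> real) \<Rightarrow> real^'n \<Rightarrow> real^'n" where
  "grad m A B x = (real m / tform m B x) *\<^sub>R (tvec m A x - lam m A B x *\<^sub>R tvec m B x)"

definition nonneg :: "real^'n \<Rightarrow> bool" where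
  "nonneg x \<longleftrightarrow> (\<forall>i. 0 \<le> x $ i)"

definition Omega :: "(real^'n) set" where
  "Omega = {x. x \<bullet> x = 1 \<and> nonneg x}"

definition is_proj_Omega :: "(real^'n \<Rightarrow> real^'n) \<Rightarrow> bool" where
  "is_proj_Omega P \<longleftrightarrow> (\<forall>z. P z \<in> Omega \<and> (\<forall>y\<in>Omega. dist z (P z) \<le> dist z y))"

definition teicp_sol :: "nat \<Rightarrow> ('n::finite list \<Rightarrow> real) \<Rightarrow> ('n list \<Rightarrow> real) \<Rightarrow> real \<Rightarrow> real^'n \<Rightarrow> bool" where
  "teicp_sol m A B l x \<longleftrightarrow> x \<noteq> 0 \<and> nonneg x \<and>
     nonneg (l *\<^sub>R tvec m B x - tvec m A x) \<and> x \<bullet> (l *\<^sub>R tvec m B x - tvec m A x) = 0"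

definition pareto_eigenvalue :: "nat \<Rightarrow> ('n::finite list \<Rightarrow> real) \<Rightarrow> ('n list \<Rightarrow> real) \<Rightarrow> real \<Rightarrow> bool" where
  "pareto_eigenvalue m A B l \<longleftrightarrow> (\<exists>x. teicp_sol m A B l x)"

text \<open>KKT point of max { lam x : x in Omega }.\<close>
definition constrained_stationary :: "nat \<Rightarrow> ('n::finite list \<Rightarrow> real) \<Rightarrow> ('n list \<Rightarrow> real) \<Rightarrow> real^'n \<Rightarrow> bool" where
  "constrained_stationary m A B x \<longleftrightarrow> x \<in> Omega \<and>
     (\<exists>\<mu> v. grad m A B x + (2 * \<mu>) *\<^sub>R x + v = 0 \<and> nonneg v \<and> v \<bullet> x = 0)"

definition spg_d :: "nat \<Rightarrow> ('n::finite list \<Rightarrow> real) \<Rightarrow> ('n list \<Rightarrow> real) \<Rightarrow> (real^'n \<Rightarrow> real^'n) \<Rightarrow> real^'n \<Rightarrow> real \<Rightarrow> real^'n" where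
  "spg_d m A B P x b = P (x + b *\<^sub>R grad m A B x) - x"

text \<open>Armijo test passes for alpha = (1/2)^j (the while loop stops).\<close>
definition armijo_ok :: "nat \<Rightarrow> ('n::finite list \<Rightarrow> real) \<Rightarrow> ('n list \<Rightarrow> real) \<Rightarrow> real \<Rightarrow> real^'n \<Rightarrow> real^'n \<Rightarrow> nat \<Rightarrow> bool" where
  "armijo_ok m A B \<rho> x d j \<longleftrightarrow>
     \<not> (lam m A B (x + ((1/2)^j) *\<^sub>R d) < lam m A B x + \<rho> * (1/2)^j * (grad m A B x \<bullet> d))"

definition spg_alpha :: "nat \<Rightarrow> ('n::finite list \<Rightarrow> real) \<Rightarrow> ('n list \<Rightarrow> real) \<Rightarrow> real \<Rightarrow> real^'n \<Rightarrow> real^'n \<Rightarrow> real" where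
  "spg_alpha m A B \<rho> x d = (1/2) ^ (LEAST j. armijo_ok m A B \<rho> x d j)"

definition spg_beta_next :: "real \<Rightarrow> real \<Rightarrow> real^'n \<Rightarrow> real^'n \<Rightarrow> real" where
  "spg_beta_next bmin bmax s y =
     (if s \<bullet> y \<le> 0 then bmax else max bmin (min bmax ((s \<bullet> s) / (s \<bullet> y))))"

text \<open>(x, beta) is generated by SPG1: the recursion applies as long as no
  d_i (i \<le> k) has vanished, i.e. as long as the algorithm has not stopped.\<close>
definition spg1_run :: "nat \<Rightarrow> ('n::finite list \<Rightarrow> real) \<Rightarrow> ('n list \<Rightarrow> real) \<Rightarrow> (real^'n \<Rightarrow> real^'n)
    \<Rightarrow> real \<Rightarrow> real \<Rightarrow> real \<Rightarrow> (nat \<Rightarrow> real^'n) \<Rightarrow> (nat \<Rightarrow> real) \<Rightarrow> bool" where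
  "spg1_run m A B P \<rho> bmin bmax x \<beta> \<longleftrightarrow>
     x 0 \<in> Omega \<and> \<beta> 0 = 1 / norm (grad m A B (x 0)) \<and>
     (\<forall>k. (\<forall>i\<le>k. spg_d m A B P (x i) (\<beta> i) \<noteq> 0) \<longrightarrow>
        (let d = spg_d m A B P (x k) (\<beta> k) in
          x (Suc k) = x k + spg_alpha m A B \<rho> (x k) d *\<^sub>R d \<and>
          \<beta> (Suc k) = spg_beta_next bmin bmax (x (Suc k) - x k)
                         (grad m A B (x (Suc k)) - grad m A B (x k))))"

end

theory Submission
  imports Defs
begin


definition LL :: "nat \<Rightarrow> 'n::finite list set" where "LL k = {js. length js = k}"

definition pl :: "real^'n::finite \<Rightarrow> 'n list \<Rightarrow> real" where
  "pl x js = prod_list (map (\<lambda>j. x $ j) js)"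

lemma pl_Nil[simp]: "pl x [] = 1" and pl_Cons[simp]: "pl x (a#as) = x$a * pl x as"
  and pl_append[simp]: "pl x (as @ bs) = pl x as * pl x bs"
  by (simp_all add: pl_def)

lemma finite_LL[simp]: "finite (LL k :: 'n::finite list set)"
  using finite_lists_length_eq[of "UNIV::'n set" k] unfolding LL_def by simp

lemma tvec_pl: "tvec m A x = (\<chi> i. \<Sum>js\<in>LL (m-1). A (i#js) * pl x js)"
  unfolding tvec_def LL_def pl_def by simp

lemma sum_LL_Suc:
  fixes f :: "'n::finite list \<Rightarrow> 'b::comm_monoid_add"
  shows "(\<Sum>zs\<in>LL (Suc k). f zs) = (\<Sum>i\<in>UNIV. \<Sum>js\<in>LL k. f (i#js))"
proof -
  have img: "LL (Suc k) = (\<lambda>(i,js). i#js) ` (UNIV \<times> LL k)"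
  proof
    show "LL (Suc k) \<subseteq> (\<lambda>(i,js). i#js) ` (UNIV \<times> LL k)"
    proof
      fix zs assume "zs \<in> LL (Suc k)"
      then obtain a as where "zs = a#as" "length as = k" unfolding LL_def
        by (cases "zs") auto
      then show "zs \<in> (\<lambda>(i,js). i#js) ` (UNIV \<times> LL k)" unfolding LL_def by auto
    qed
  qed (auto simp: LL_def)
  have inj: "inj_on (\<lambda>(i,js). i#js) (UNIV \<times> (LL k :: 'n list set))"
    by (auto simp: inj_on_def)
  have "(\<Sum>zs\<in>LL (Suc k). f zs) = (\<Sum>p\<in>UNIV \<times> LL k. f ((\<lambda>(i,js). i#js) p))"
    unfolding img by (subst sum.reindex[OF inj]) (simp add: o_def)
  also have "\<dots> = (\<Sum>i\<in>UNIV. \<Sum>js\<in>LL k. f (i#js))"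
    by (simp add: sum.cartesian_product prod.case_distrib)
  finally show ?thesis .
qed

lemma tform_F:
  assumes "m \<noteq> 0"
  shows "tform m A x = (\<Sum>zs\<in>LL m. A zs * pl x zs)"
proof -
  obtain k where m: "m = Suc k" using assms by (cases m) auto
  show ?thesis unfolding tform_def tvec_pl m inner_vec_def
    by (simp add: sum_LL_Suc sum_distrib_left mult_ac)
qed

lemma pl_deriv:
  "((\<lambda>x. pl x zs) has_derivative
     (\<lambda>h. \<Sum>p<length zs. h$(zs!p) * pl x (take p zs @ drop (Suc p) zs))) (at x)"
proof (induction "zs")
  case Nil
  then show ?case by simp
next
  case (Cons a "zs")
  have d1: "((\<lambda>x. x$a) has_derivative (\<lambda>h. h$a)) (at x)"
    by (rule bounded_linear_imp_has_derivative[OF bounded_linear_vec_nth])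
  have "((\<lambda>x. x$a * pl x zs) has_derivative
      (\<lambda>h. x$a * (\<Sum>p<length zs. h$(zs!p) * pl x (take p zs @ drop (Suc p) zs)) + h$a * pl x zs)) (at x)"
    by (rule has_derivative_mult[OF d1 Cons.IH])
  moreover have "(\<lambda>h. x$a * (\<Sum>p<length zs. h$(zs!p) * pl x (take p zs @ drop (Suc p) zs)) + h$a * pl x zs)
     = (\<lambda>h. \<Sum>p<length (a#zs). h$((a#zs)!p) * pl x (take p (a#zs) @ drop (Suc p) (a#zs)))"
    by (rule ext, simp only: length_Cons sum.lessThan_Suc_shift)
       (simp add: sum_distrib_left mult_ac)
  ultimately show ?case by simp
qed

lemma rot_reindex:
  assumes sym: "sym_tensor m A" and p: "p < m"
  shows "(\<Sum>zs\<in>LL m. A zs * (h$(zs!p) * pl x (take p zs @ drop (Suc p) zs)))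
       = (\<Sum>zs\<in>LL m. A zs * (h$(hd zs) * pl x (tl zs)))"
proof (rule sum.reindex_bij_witness[where j = "\<lambda>a. a!p # (take p a @ drop (Suc p) a)"
      and i = "\<lambda>b. take p (tl b) @ hd b # drop p (tl b)"])
  fix a :: "'a list" assume a: "a \<in> LL m"
  then have la: "length a = m" by (simp add: LL_def)
  show "take p (tl (a!p # (take p a @ drop (Suc p) a))) @ hd (a!p # (take p a @ drop (Suc p) a))
         # drop p (tl (a!p # (take p a @ drop (Suc p) a))) = a"
    using p la by (simp add: id_take_nth_drop[symmetric] min_def)
  show "a!p # (take p a @ drop (Suc p) a) \<in> LL m" using p la by (simp add: LL_def)
  have ms: "mset (a!p # (take p a @ drop (Suc p) a)) = mset a"
    using p la id_take_nth_drop[of p a] by (metis add_mset_add_single mset.simps(2) mset_append union_mset_add_mset_right)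
  have "A (a!p # (take p a @ drop (Suc p) a)) = A a"
    using sym ms la unfolding sym_tensor_def by (metis (no_types) length_Cons size_mset)
  then show "A (a!p # (take p a @ drop (Suc p) a)) * (h$(hd (a!p # (take p a @ drop (Suc p) a)))
      * pl x (tl (a!p # (take p a @ drop (Suc p) a)))) = A a * (h$(a!p) * pl x (take p a @ drop (Suc p) a))"
    by simp
next
  fix b :: "'a list" assume b: "b \<in> LL m"
  then obtain c cs where bc: "b = c#cs" "length cs = m - 1" using p unfolding LL_def
    by (cases b) auto
  have pc: "p \<le> length cs" using bc p by simp
  show "take p (tl b) @ hd b # drop p (tl b) \<in> LL m" using bc p by (simp add: LL_def)
  show "(take p (tl b) @ hd b # drop p (tl b)) ! p # (take p (take p (tl b) @ hd b # drop p (tl b))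
        @ drop (Suc p) (take p (tl b) @ hd b # drop p (tl b))) = b"
    using bc pc by (simp add: nth_append min_def)
qed

lemma hd_sum:
  assumes "m = Suc k"
  shows "(\<Sum>zs\<in>LL m. A zs * (h$(hd zs) * pl x (tl zs))) = h \<bullet> tvec m A x"
  unfolding assms tvec_pl inner_vec_def
  by (simp add: sum_LL_Suc sum_distrib_left mult_ac)

lemma tform_deriv:
  assumes sym: "sym_tensor m A" and m: "m \<noteq> 0"
  shows "(tform m A has_derivative (\<lambda>h. real m * (h \<bullet> tvec m A x))) (at x)"
proof -
  obtain k where mk: "m = Suc k" using m by (cases m) auto
  have eq: "tform m A = (\<lambda>x. \<Sum>zs\<in>LL m. A zs * pl x zs)"
    using tform_F[OF m] by (rule ext)
  have "((\<lambda>x. \<Sum>zs\<in>LL m. A zs * pl x zs) has_derivative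
     (\<lambda>h. \<Sum>zs\<in>LL m. A zs * (\<Sum>p<length zs. h$(zs!p) * pl x (take p zs @ drop (Suc p) zs)))) (at x)"
    by (intro has_derivative_sum has_derivative_mult_right pl_deriv)
  moreover have "(\<lambda>h. \<Sum>zs\<in>LL m. A zs * (\<Sum>p<length zs. h$(zs!p) * pl x (take p zs @ drop (Suc p) zs)))
      = (\<lambda>h. real m * (h \<bullet> tvec m A x))"
  proof
    fix h :: "real^'a"
    have "(\<Sum>zs\<in>LL m. A zs * (\<Sum>p<length zs. h$(zs!p) * pl x (take p zs @ drop (Suc p) zs)))
       = (\<Sum>zs\<in>LL m. \<Sum>p<m. A zs * (h$(zs!p) * pl x (take p zs @ drop (Suc p) zs)))"
      by (rule sum.cong) (auto simp: LL_def sum_distrib_left)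
    also have "\<dots> = (\<Sum>p<m. \<Sum>zs\<in>LL m. A zs * (h$(zs!p) * pl x (take p zs @ drop (Suc p) zs)))"
      by (rule sum.swap)
    also have "\<dots> = (\<Sum>p<m. \<Sum>zs\<in>LL m. A zs * (h$(hd zs) * pl x (tl zs)))"
      by (rule sum.cong[OF refl]) (use rot_reindex[OF sym] in simp)
    also have "\<dots> = real m * (h \<bullet> tvec m A x)"
      by (simp add: hd_sum[OF mk])
    finally show "(\<Sum>zs\<in>LL m. A zs * (\<Sum>p<length zs. h$(zs!p) * pl x (take p zs @ drop (Suc p) zs)))
      = real m * (h \<bullet> tvec m A x)" .
  qed
  ultimately show ?thesis unfolding eq by simp
qed



lemma pl_scale: "pl (c *\<^sub>R x) js = c ^ length js * pl x js"
  by (induction js) (simp_all add: mult_ac)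

lemma tvec_scale: "tvec m A (c *\<^sub>R x) = c^(m-1) *\<^sub>R tvec m A x"
proof -
  have "\<And>i. (\<Sum>js\<in>LL (m-1). A (i#js) * pl (c *\<^sub>R x) js) = c^(m-1) * (\<Sum>js\<in>LL (m-1). A (i#js) * pl x js)"
    by (simp add: sum_distrib_left, rule sum.cong) (auto simp: LL_def pl_scale mult_ac)
  then show ?thesis unfolding tvec_pl by (simp add: vec_eq_iff)
qed

lemma tform_scale: "m \<noteq> 0 \<Longrightarrow> tform m A (c *\<^sub>R x) = c^m * tform m A x"
  unfolding tform_def tvec_scale by (cases m) auto

lemma lam_scale: "m \<noteq> 0 \<Longrightarrow> c \<noteq> 0 \<Longrightarrow> lam m A B (c *\<^sub>R x) = lam m A B x"
  unfolding lam_def by (simp add: tform_scale)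

lemma grad_scale:
  assumes "m \<noteq> 0" "c \<noteq> 0"
  shows "grad m A B (c *\<^sub>R x) = (1/c) *\<^sub>R grad m A B x"
proof -
  obtain k where mk: "m = Suc k" using assms by (cases m) auto
  have l: "lam m A B (c *\<^sub>R x) = lam m A B x" using assms by (rule lam_scale)
  let ?t = "tform m B x" and ?l = "lam m A B x" and ?a = "tvec m A x" and ?b = "tvec m B x"
  have "grad m A B (c *\<^sub>R x) = (real (Suc k) / (c^(Suc k) * ?t)) *\<^sub>R (c^k *\<^sub>R ?a - ?l *\<^sub>R (c^k *\<^sub>R ?b))"
    unfolding grad_def l using assms by (simp add: tform_scale tvec_scale mk)
  also have "\<dots> = (real (Suc k) / (c^(Suc k) * ?t) * c^k) *\<^sub>R (?a - ?l *\<^sub>R ?b)"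
    by (simp add: algebra_simps)
  also have "real (Suc k) / (c^(Suc k) * ?t) * c^k = (1/c) * (real (Suc k) / ?t)"
    using assms by (cases "?t = 0") (simp_all add: field_simps)
  finally show ?thesis unfolding grad_def mk by simp
qed

lemma euler: "x \<bullet> grad m A B x = 0"
  unfolding grad_def lam_def
  by (cases "tform m B x = 0") (simp_all add: inner_diff_right tform_def[symmetric] inner_commute)

lemma m_pos:
  assumes "pos_def_tensor m B" shows "m \<noteq> 0"
proof
  assume m0: "m = 0"
  obtain i :: 'a where True by simp
  let ?x = "axis i (1::real) :: real^'a"
  have nz: "?x \<noteq> 0" by (simp add: axis_eq_0_iff)
  have "tform m B ((-1) *\<^sub>R ?x) = - tform m B ?x"
    unfolding tform_def tvec_scale m0 by simp
  moreover have "tform m B ((-1) *\<^sub>R ?x) > 0" "tform m B ?x > 0"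
    using assms nz unfolding pos_def_tensor_def by auto
  ultimately show False by simp
qed

definition blip :: "(real^'n::finite) set \<Rightarrow> (real^'n \<Rightarrow> 'b::real_normed_vector) \<Rightarrow> bool" where
  "blip S f \<longleftrightarrow> (\<exists>K\<ge>0. \<forall>x\<in>S. \<forall>y\<in>S. norm (f x - f y) \<le> K * norm (x - y))
     \<and> (\<exists>M\<ge>0. \<forall>x\<in>S. norm (f x) \<le> M)"

lemma blipE:
  assumes "blip S f"
  obtains K M where "K \<ge> 0" "M \<ge> 0" "\<And>x y. x\<in>S \<Longrightarrow> y\<in>S \<Longrightarrow> norm (f x - f y) \<le> K * norm (x - y)"
    "\<And>x. x\<in>S \<Longrightarrow> norm (f x) \<le> M"
  using assms unfolding blip_def by blast

lemma blipI:
  assumes "K \<ge> 0" "M \<ge> 0" "\<And>x y. x\<in>S \<Longrightarrow> y\<in>S \<Longrightarrow> norm (f x - f y) \<le> K * norm (x - y)"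
    "\<And>x. x\<in>S \<Longrightarrow> norm (f x) \<le> M"
  shows "blip S f"
  using assms unfolding blip_def by blast

lemma blip_const: "blip S (\<lambda>x. c)"
  by (rule blipI[of 0 "norm c"]) auto

lemma blip_add:
  assumes "blip S f" "blip S g" shows "blip S (\<lambda>x. f x + g x)"
proof -
  obtain K1 M1 where 1: "K1 \<ge> 0" "M1 \<ge> 0" "\<And>x y. x\<in>S \<Longrightarrow> y\<in>S \<Longrightarrow> norm (f x - f y) \<le> K1 * norm (x - y)"
    "\<And>x. x\<in>S \<Longrightarrow> norm (f x) \<le> M1" using blipE[OF assms(1)] by blast
  obtain K2 M2 where 2: "K2 \<ge> 0" "M2 \<ge> 0" "\<And>x y. x\<in>S \<Longrightarrow> y\<in>S \<Longrightarrow> norm (g x - g y) \<le> K2 * norm (x - y)"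
    "\<And>x. x\<in>S \<Longrightarrow> norm (g x) \<le> M2" using blipE[OF assms(2)] by blast
  show ?thesis
  proof (rule blipI[of "K1+K2" "M1+M2"])
    fix x y assume xy: "x\<in>S" "y\<in>S"
    have "norm (f x + g x - (f y + g y)) \<le> norm (f x - f y) + norm (g x - g y)"
      by (metis add_diff_add norm_triangle_ineq)
    also have "\<dots> \<le> (K1+K2) * norm (x-y)" using 1(3)[OF xy] 2(3)[OF xy] by (simp add: algebra_simps)
    finally show "norm (f x + g x - (f y + g y)) \<le> (K1+K2) * norm (x-y)" .
  next
    fix x assume "x\<in>S"
    then show "norm (f x + g x) \<le> M1 + M2" using 1(4) 2(4) by (meson add_mono norm_triangle_le)
  qed (use 1 2 in auto)
qed

lemma blip_neg: "blip S f \<Longrightarrow> blip S (\<lambda>x. - f x)"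
  unfolding blip_def by (metis minus_diff_minus norm_minus_cancel norm_minus_commute)

lemma blip_diff: "blip S f \<Longrightarrow> blip S g \<Longrightarrow> blip S (\<lambda>x. f x - g x)"
  using blip_add[of S f "\<lambda>x. - g x"] blip_neg[of S g] by simp

lemma blip_bilinear:
  fixes prod :: "'b::real_normed_vector \<Rightarrow> 'c::real_normed_vector \<Rightarrow> 'd::real_normed_vector"
  assumes bl: "bounded_bilinear prod" and f: "blip S f" and g: "blip S g"
  shows "blip S (\<lambda>x. prod (f x) (g x))"
proof -
  interpret bounded_bilinear prod by (rule bl)
  obtain C where C: "C > 0" "\<And>a b. norm (prod a b) \<le> norm a * norm b * C"
    using pos_bounded by blast
  obtain K1 M1 where 1: "K1 \<ge> 0" "M1 \<ge> 0" "\<And>x y. x\<in>S \<Longrightarrow> y\<in>S \<Longrightarrow> norm (f x - f y) \<le> K1 * norm (x - y)"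
    "\<And>x. x\<in>S \<Longrightarrow> norm (f x) \<le> M1" using blipE[OF f] by blast
  obtain K2 M2 where 2: "K2 \<ge> 0" "M2 \<ge> 0" "\<And>x y. x\<in>S \<Longrightarrow> y\<in>S \<Longrightarrow> norm (g x - g y) \<le> K2 * norm (x - y)"
    "\<And>x. x\<in>S \<Longrightarrow> norm (g x) \<le> M2" using blipE[OF g] by blast
  show ?thesis
  proof (rule blipI[of "C * (M1*K2 + K1*M2)" "M1*M2*C"])
    fix x y assume xy: "x\<in>S" "y\<in>S"
    have eq: "prod (f x) (g x) - prod (f y) (g y) = prod (f x) (g x - g y) + prod (f x - f y) (g y)"
      by (simp add: diff_right diff_left)
    have "norm (prod (f x) (g x - g y)) \<le> norm (f x) * norm (g x - g y) * C" by (rule C(2))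
    also have "\<dots> \<le> M1 * (K2 * norm (x-y)) * C"
      using 1(4)[OF xy(1)] 2(3)[OF xy] C(1) 1(2) by (intro mult_right_mono mult_mono) auto
    finally have a: "norm (prod (f x) (g x - g y)) \<le> M1 * (K2 * norm (x-y)) * C" .
    have "norm (prod (f x - f y) (g y)) \<le> norm (f x - f y) * norm (g y) * C" by (rule C(2))
    also have "\<dots> \<le> (K1 * norm (x-y)) * M2 * C"
      using 1(3)[OF xy] 2(4)[OF xy(2)] C(1) 1(1) by (intro mult_right_mono mult_mono) auto
    finally have b: "norm (prod (f x - f y) (g y)) \<le> (K1 * norm (x-y)) * M2 * C" .
    show "norm (prod (f x) (g x) - prod (f y) (g y)) \<le> C * (M1*K2 + K1*M2) * norm (x-y)"
      unfolding eq using norm_triangle_le[OF add_mono[OF a b]] by (simp add: algebra_simps)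
  next
    fix x assume x: "x\<in>S"
    have "norm (prod (f x) (g x)) \<le> norm (f x) * norm (g x) * C" by (rule C(2))
    also have "\<dots> \<le> M1 * M2 * C" using 1(4)[OF x] 2(4)[OF x] C(1) 1(2)
      by (intro mult_right_mono mult_mono) auto
    finally show "norm (prod (f x) (g x)) \<le> M1*M2*C" .
  qed (use 1 2 C in auto)
qed

lemma blip_mult: "blip S (f::_\<Rightarrow>real) \<Longrightarrow> blip S g \<Longrightarrow> blip S (\<lambda>x. f x * g x)"
  by (rule blip_bilinear[OF bounded_bilinear_mult])

lemma blip_scaleR: "blip S (f::_\<Rightarrow>real) \<Longrightarrow> blip S g \<Longrightarrow> blip S (\<lambda>x. f x *\<^sub>R g x)"
  by (rule blip_bilinear[OF bounded_bilinear_scaleR])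

lemma blip_inner: "blip S (f::_\<Rightarrow>real^'m::finite) \<Longrightarrow> blip S g \<Longrightarrow> blip S (\<lambda>x. f x \<bullet> g x)"
  by (rule blip_bilinear[OF bounded_bilinear_inner])

lemma blip_inverse:
  assumes f: "blip S (f::_\<Rightarrow>real)" and c: "c > 0" "\<And>x. x\<in>S \<Longrightarrow> c \<le> \<bar>f x\<bar>"
  shows "blip S (\<lambda>x. inverse (f x))"
proof -
  obtain K M where 1: "K \<ge> 0" "M \<ge> 0" "\<And>x y. x\<in>S \<Longrightarrow> y\<in>S \<Longrightarrow> norm (f x - f y) \<le> K * norm (x - y)"
    "\<And>x. x\<in>S \<Longrightarrow> norm (f x) \<le> M" using blipE[OF f] by blast
  show ?thesis
  proof (rule blipI[of "K / c^2" "1/c"])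
    fix x y assume xy: "x\<in>S" "y\<in>S"
    have fx: "c \<le> \<bar>f x\<bar>" and fy: "c \<le> \<bar>f y\<bar>" using c xy by auto
    then have nz: "f x \<noteq> 0" "f y \<noteq> 0" using c by auto
    have "\<bar>inverse (f x) - inverse (f y)\<bar> = \<bar>f y - f x\<bar> / (\<bar>f x\<bar> * \<bar>f y\<bar>)"
      using nz by (simp add: inverse_diff_inverse abs_mult divide_inverse mult_ac abs_inverse)
    also have "\<dots> \<le> (K * norm (x-y)) / c^2"
    proof (rule frac_le)
      show "\<bar>f y - f x\<bar> \<le> K * norm (x-y)" using 1(3)[OF xy] by (simp add: abs_minus_commute)
      show "c^2 \<le> \<bar>f x\<bar> * \<bar>f y\<bar>" using fx fy c unfolding power2_eq_square
        by (intro mult_mono) auto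
    qed (use c 1 in auto)
    finally show "norm (inverse (f x) - inverse (f y)) \<le> K / c^2 * norm (x-y)" by simp
  next
    fix x assume "x\<in>S"
    then have "c \<le> \<bar>f x\<bar>" using c by auto
    then show "norm (inverse (f x)) \<le> 1/c" using c by (simp add: abs_inverse divide_inverse le_imp_inverse_le)
  qed (use c 1 in auto)
qed

lemma blip_sum:
  assumes "finite I" "\<And>i. i\<in>I \<Longrightarrow> blip S (f i)"
  shows "blip S (\<lambda>x. \<Sum>i\<in>I. f i x)"
  using assms by (induction I rule: finite_induct) (simp_all add: blip_const blip_add)

lemma blip_nth:
  fixes S :: "(real^'n::finite) set"
  assumes "bounded S" shows "blip S (\<lambda>x. x $ j)"
proof -
  obtain M where M: "\<And>x. x\<in>S \<Longrightarrow> norm x \<le> M" using assms bounded_iff by blast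
  show ?thesis
  proof (rule blipI[of 1 "max M 0"])
    fix x y :: "real^'n" show "norm (x$j - y$j) \<le> 1 * norm (x - y)"
      using component_le_norm_cart[of "x-y" j] by simp
  next
    fix x assume "x\<in>S" then show "norm (x$j) \<le> max M 0"
      using component_le_norm_cart[of x j] M by fastforce
  qed auto
qed

lemma blip_id:
  fixes S :: "(real^'n::finite) set"
  assumes "bounded S" shows "blip S (\<lambda>x. x)"
proof -
  obtain M where M: "\<And>x. x\<in>S \<Longrightarrow> norm x \<le> M" using assms bounded_iff by blast
  show ?thesis by (rule blipI[of 1 "max M 0"]) (use M in fastforce)+
qed

lemma blip_vec:
  fixes f :: "real^'n::finite \<Rightarrow> real^'m::finite"
  assumes "\<And>i. blip S (\<lambda>x. f x $ i)"
  shows "blip S f"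
proof -
  have "blip S (\<lambda>x. \<Sum>i\<in>UNIV. (f x $ i) *\<^sub>R axis i (1::real))"
    by (intro blip_sum blip_scaleR assms blip_const) auto
  moreover have "(\<lambda>x. \<Sum>i\<in>UNIV. (f x $ i) *\<^sub>R axis i (1::real)) = f"
    by (rule ext) (simp add: vec_eq_iff axis_def if_distrib cong: if_cong)
  ultimately show ?thesis by simp
qed

lemma blip_cont:
  assumes "blip S f" shows "continuous_on S f"
proof -
  obtain K M where 1: "K \<ge> 0" "M \<ge> 0" "\<And>x y. x\<in>S \<Longrightarrow> y\<in>S \<Longrightarrow> norm (f x - f y) \<le> K * norm (x - y)"
    "\<And>x. x\<in>S \<Longrightarrow> norm (f x) \<le> M" using blipE[OF assms] by blast
  have "(K+1)-lipschitz_on S f"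
  proof (rule lipschitz_onI)
    fix x y assume xy: "x \<in> S" "y \<in> S"
    have "norm (f x - f y) \<le> K * norm (x - y)" by (rule 1(3)[OF xy])
    also have "\<dots> \<le> (K+1) * norm (x - y)" by (simp add: mult_right_mono)
    finally show "dist (f x) (f y) \<le> (K + 1) * dist x y" by (simp add: dist_norm)
  qed (use 1 in auto)
  then show ?thesis by (rule lipschitz_on_continuous_on)
qed

lemma blip_pl: "bounded S \<Longrightarrow> blip S (\<lambda>x. pl x js)"
  by (induction js) (simp_all add: blip_const blip_mult blip_nth)

lemma blip_tvec: "bounded S \<Longrightarrow> blip S (tvec m A)"
  unfolding tvec_pl
  by (rule blip_vec) (simp, intro blip_sum blip_mult blip_const blip_pl, auto)

lemma blip_tform: "bounded S \<Longrightarrow> blip S (tform m A)"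
  unfolding tform_def[abs_def] by (intro blip_inner blip_id blip_tvec)



definition XX :: "(real^'n::finite) set" where
  "XX = {x. nonneg x \<and> 1 \<le> (\<Sum>i\<in>UNIV. x$i) \<and> norm x \<le> 1}"

lemma XX_bounded: "bounded XX"
  unfolding bounded_iff XX_def by auto

lemma XX_closed: "closed (XX :: (real^'n::finite) set)"
proof -
  have eq: "XX = (\<Inter>i. {x::real^'n. 0 \<le> x$i}) \<inter> {x. 1 \<le> (\<Sum>i\<in>UNIV. x$i)} \<inter> {x. norm x \<le> 1}"
    unfolding XX_def nonneg_def by auto
  have c1: "closed {x::real^'n. 0 \<le> x$i}" for i
    by (intro closed_Collect_le continuous_intros)
  have c2: "closed {x::real^'n. 1 \<le> (\<Sum>i\<in>UNIV. x$i)}"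
    by (intro closed_Collect_le continuous_intros)
  have c3: "closed {x::real^'n. norm x \<le> 1}"
    by (intro closed_Collect_le continuous_intros)
  show ?thesis unfolding eq by (intro closed_Int closed_INT ballI c1 c2 c3)
qed

lemma XX_compact: "compact XX"
  using XX_bounded XX_closed by (simp add: compact_eq_bounded_closed)

lemma XX_convex: "convex XX"
proof (rule convexI)
  fix x y :: "real^'n" and u v :: real
  assume x: "x \<in> XX" and y: "y \<in> XX" and uv0: "0 \<le> u" "0 \<le> v" "u + v = 1"
  then have uv: "0 \<le> u \<and> 0 \<le> v \<and> u + v = 1" by simp
  have "nonneg (u *\<^sub>R x + v *\<^sub>R y)" using x y uv unfolding XX_def nonneg_def by auto
  moreover have "(\<Sum>i\<in>UNIV. (u *\<^sub>R x + v *\<^sub>R y)$i) = u * (\<Sum>i\<in>UNIV. x$i) + v * (\<Sum>i\<in>UNIV. y$i)"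
    by (simp add: sum.distrib sum_distrib_left)
  moreover have "u * (\<Sum>i\<in>UNIV. x$i) + v * (\<Sum>i\<in>UNIV. y$i) \<ge> u * 1 + v * 1"
    using x y uv unfolding XX_def by (intro add_mono mult_left_mono) auto
  moreover have "norm (u *\<^sub>R x + v *\<^sub>R y) \<le> u * 1 + v * 1"
  proof -
    have "norm (u *\<^sub>R x + v *\<^sub>R y) \<le> u * norm x + v * norm y"
      using uv by (metis abs_of_nonneg norm_scaleR norm_triangle_ineq)
    also have "\<dots> \<le> u * 1 + v * 1" using x y uv unfolding XX_def by (intro add_mono mult_left_mono) auto
    finally show ?thesis .
  qed
  ultimately show "u *\<^sub>R x + v *\<^sub>R y \<in> XX" using uv unfolding XX_def by auto
qed

lemma norm_Omega: "z \<in> Omega \<Longrightarrow> norm z = 1"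
  unfolding Omega_def by (simp add: norm_eq_sqrt_inner)

lemma Omega_XX: "Omega \<subseteq> XX"
proof
  fix z :: "real^'n" assume z: "z \<in> Omega"
  then have zz: "z \<bullet> z = 1" and nn: "nonneg z" unfolding Omega_def by auto
  have le1: "z$i \<le> 1" for i
  proof -
    have "\<bar>z$i\<bar> \<le> norm z" by (rule component_le_norm_cart)
    then show ?thesis using norm_Omega[OF z] by simp
  qed
  have "(\<Sum>i\<in>UNIV. z$i) \<ge> (\<Sum>i\<in>UNIV. z$i * z$i)"
  proof (rule sum_mono)
    fix i show "z$i * z$i \<le> z$i" using le1[of i] nn unfolding nonneg_def
      by (simp add: mult_left_le)
  qed
  moreover have "(\<Sum>i\<in>UNIV. z$i * z$i) = 1" using zz by (simp add: inner_vec_def)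
  ultimately show "z \<in> XX" using nn norm_Omega[OF z] unfolding XX_def by auto
qed

lemma XX_nz: "x \<in> XX \<Longrightarrow> x \<noteq> 0"
  unfolding XX_def by auto

lemma axis_Omega: "axis i 1 \<in> Omega"
  unfolding Omega_def nonneg_def by (auto simp: inner_axis_axis) (auto simp: axis_def)

lemma XX_ne: "XX \<noteq> {}"
  using Omega_XX axis_Omega by blast

lemma tfB_pos: "pos_def_tensor m B \<Longrightarrow> x \<noteq> 0 \<Longrightarrow> tform m B x > 0"
  unfolding pos_def_tensor_def by auto

lemma tfB_lower:
  assumes "pos_def_tensor m B"
  shows "\<exists>c>0. \<forall>x\<in>(XX::(real^'n::finite) set). c \<le> tform m B x"
proof -
  have "continuous_on XX (tform m B :: real^'n \<Rightarrow> real)"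
    by (rule blip_cont[OF blip_tform[OF XX_bounded]])
  then obtain x0 where x0: "x0 \<in> XX" "\<forall>y\<in>XX. tform m B x0 \<le> tform m B y"
    using continuous_attains_inf[OF XX_compact XX_ne] by blast
  then show ?thesis using tfB_pos[OF assms XX_nz[OF x0(1)]] by blast
qed

lemma norm_lower: "\<exists>c>0. \<forall>x\<in>(XX::(real^'n::finite) set). c \<le> norm x"
proof -
  have cn: "continuous_on (XX::(real^'n) set) (norm :: real^'n \<Rightarrow> real)" by (intro continuous_intros)
  have "\<exists>x\<in>(XX::(real^'n) set). \<forall>y\<in>(XX::(real^'n) set). norm x \<le> norm y"
    using continuous_attains_inf[OF XX_compact XX_ne cn] .
  then obtain x0 :: "real^'n" where x0: "x0 \<in> XX" "\<forall>y\<in>(XX::(real^'n) set). norm x0 \<le> norm y"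
    by blast
  have "norm x0 > 0" using XX_nz[OF x0(1)] by simp
  then show ?thesis using x0(2) by blast
qed

lemma blip_lam:
  assumes "pos_def_tensor m B"
  shows "blip XX (lam m A B)"
proof -
  obtain c where c: "c > 0" "\<forall>x\<in>XX. c \<le> tform m B x" using tfB_lower[OF assms] by blast
  have "blip XX (\<lambda>x. tform m A x * inverse (tform m B x))"
    by (intro blip_mult blip_tform blip_inverse[OF _ c(1)] XX_bounded) (use c in force)
  then show ?thesis unfolding lam_def[abs_def] by (simp add: divide_inverse)
qed

lemma blip_grad:
  assumes "pos_def_tensor m B"
  shows "blip XX (grad m A B)"
proof -
  obtain c where c: "c > 0" "\<forall>x\<in>XX. c \<le> tform m B x" using tfB_lower[OF assms] by blast
  have "blip XX (\<lambda>x. (real m * inverse (tform m B x)) *\<^sub>R (tvec m A x - lam m A B x *\<^sub>R tvec m B x))"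
    by (intro blip_mult blip_scaleR blip_diff blip_const blip_tvec blip_lam[OF assms]
         blip_tform blip_inverse[OF _ c(1)] XX_bounded) (use c in force)
  then show ?thesis unfolding grad_def[abs_def] by (simp add: divide_inverse)
qed

lemma lam_deriv:
  assumes sA: "sym_tensor m A" and sB: "sym_tensor m B" and pd: "pos_def_tensor m B"
    and nz: "u + t *\<^sub>R e \<noteq> 0"
  shows "((\<lambda>t. lam m A B (u + t *\<^sub>R e)) has_real_derivative (grad m A B (u + t *\<^sub>R e) \<bullet> e)) (at t)"
proof -
  have m: "m \<noteq> 0" by (rule m_pos[OF pd])
  let ?p = "u + t *\<^sub>R e"
  have line: "((\<lambda>t. u + t *\<^sub>R e) has_derivative (\<lambda>s. s *\<^sub>R e)) (at t)"
    by (auto intro!: derivative_eq_intros)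
  have dA: "((\<lambda>t. tform m A (u + t *\<^sub>R e)) has_real_derivative (real m * (e \<bullet> tvec m A ?p))) (at t)"
    unfolding has_field_derivative_def
    by (rule has_derivative_eq_rhs[OF has_derivative_compose[OF line tform_deriv[OF sA m, of ?p]]])
       (simp add: fun_eq_iff mult_ac)
  have dB: "((\<lambda>t. tform m B (u + t *\<^sub>R e)) has_real_derivative (real m * (e \<bullet> tvec m B ?p))) (at t)"
    unfolding has_field_derivative_def
    by (rule has_derivative_eq_rhs[OF has_derivative_compose[OF line tform_deriv[OF sB m, of ?p]]])
       (simp add: fun_eq_iff mult_ac)
  have pos: "tform m B ?p > 0" using tfB_pos[OF pd nz] .
  have "((\<lambda>t. tform m A (u + t *\<^sub>R e) / tform m B (u + t *\<^sub>R e)) has_real_derivative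
      ((real m * (e \<bullet> tvec m A ?p)) * tform m B ?p - tform m A ?p * (real m * (e \<bullet> tvec m B ?p)))
        / (tform m B ?p * tform m B ?p)) (at t)"
    by (rule DERIV_divide[OF dA dB]) (use pos in simp)
  moreover have "((real m * (e \<bullet> tvec m A ?p)) * tform m B ?p - tform m A ?p * (real m * (e \<bullet> tvec m B ?p)))
        / (tform m B ?p * tform m B ?p) = grad m A B ?p \<bullet> e"
    unfolding grad_def lam_def using pos
    by (simp add: inner_diff_right inner_commute field_simps)
  ultimately show ?thesis unfolding lam_def by simp
qed

lemma proj_max:
  assumes "z \<in> Omega" "w \<in> Omega" "dist y z \<le> dist y w"
  shows "y \<bullet> w \<le> y \<bullet> z"
proof -
  have "(dist y z)^2 \<le> (dist y w)^2" using assms(3) by (simp add: power_mono)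
  then have "(y - z) \<bullet> (y - z) \<le> (y - w) \<bullet> (y - w)"
    by (simp add: dist_norm power2_norm_eq_inner)
  moreover have "z \<bullet> z = 1" "w \<bullet> w = 1" using assms(1,2) unfolding Omega_def by auto
  ultimately show ?thesis by (simp add: inner_diff_left inner_diff_right inner_commute)
qed

lemma kkt_lemma:
  fixes u g :: "real^'n::finite"
  assumes u: "u \<in> Omega" and gam: "\<gamma> > 0" and gu: "g \<bullet> u = 0"
    and mx: "\<forall>w\<in>Omega. (u + \<gamma> *\<^sub>R g) \<bullet> w \<le> (u + \<gamma> *\<^sub>R g) \<bullet> u"
  shows "g $ i \<le> 0"
proof (rule ccontr)
  assume "\<not> g $ i \<le> 0"
  then have gi: "g $ i > 0" by simp
  define t where "t = \<gamma> * g $ i"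
  have t: "t > 0" using gam gi by (simp add: t_def)
  define y where "y = u + \<gamma> *\<^sub>R g"
  define v where "v = u + t *\<^sub>R axis i (1::real)"
  have uu: "u \<bullet> u = 1" and un: "nonneg u" using u unfolding Omega_def by auto
  have ug: "u \<bullet> g = 0" using gu by (simp add: inner_commute)
  have yu: "y \<bullet> u = 1" unfolding y_def by (simp add: inner_add_left uu gu)
  have yi: "y $ i = u $ i + t" unfolding y_def t_def by simp
  have vi: "v $ i = u $ i + t" unfolding v_def by simp
  have vpos: "v $ i > 0" using un t unfolding vi nonneg_def by (simp add: add_nonneg_pos)
  then have vnz: "v \<noteq> 0" by auto
  then have nv: "norm v > 0" by simp
  have vv: "v \<bullet> v = 1 + 2 * t * u$i + t^2"
    unfolding v_def using uu
    by (simp add: inner_add_left inner_add_right inner_axis inner_commute power2_eq_square algebra_simps)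
  have yv: "y \<bullet> v = 1 + t * y$i"
    unfolding v_def using yu by (simp add: inner_add_right inner_axis mult.commute)
  define w where "w = (1 / norm v) *\<^sub>R v"
  have wO: "w \<in> Omega"
  proof -
    have "w \<bullet> w = (v \<bullet> v) / (norm v)^2" unfolding w_def by (simp add: power2_eq_square)
    also have "\<dots> = 1" using nv by (simp add: power2_norm_eq_inner)
    finally have "w \<bullet> w = 1" .
    moreover have "nonneg w"
      using un t nv unfolding w_def v_def nonneg_def by (auto simp: axis_def)
    ultimately show ?thesis unfolding Omega_def by simp
  qed
  have "y \<bullet> w \<le> 1" using mx wO yu unfolding y_def by simp
  then have "(1 + t * y$i) / norm v \<le> 1" unfolding w_def yv[symmetric] by simp
  then have le: "1 + t * y$i \<le> norm v" using nv by (simp add: divide_le_eq)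
  have pos1: "0 \<le> 1 + t * y$i" using t un unfolding yi nonneg_def by simp
  have "(1 + t * y$i)^2 \<le> (norm v)^2" using le pos1 by (simp add: power_mono)
  then have "(1 + t * y$i)^2 \<le> 1 + 2 * t * u$i + t^2" by (simp add: power2_norm_eq_inner vv)
  moreover have "(1 + t * y$i)^2 = 1 + 2 * t * u$i + 2 * t^2 + t^2 * (y$i)^2"
    unfolding yi by (simp add: power2_eq_square algebra_simps)
  moreover have "t^2 > 0" using t by simp
  ultimately show False by (smt (verit) zero_le_power2 mult_nonneg_nonneg)
qed

lemma teicp_of_gle:
  assumes pd: "pos_def_tensor m B" and xn: "nonneg x" and xnz: "x \<noteq> 0"
    and gle: "\<forall>i. grad m A B x $ i \<le> 0"
  shows "teicp_sol m A B (lam m A B x) x"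
proof -
  have m: "m \<noteq> 0" by (rule m_pos[OF pd])
  have pos: "tform m B x > 0" by (rule tfB_pos[OF pd xnz])
  have eq: "lam m A B x *\<^sub>R tvec m B x - tvec m A x = (- tform m B x / real m) *\<^sub>R grad m A B x"
    unfolding grad_def using pos m by (simp add: algebra_simps)
  have "nonneg (lam m A B x *\<^sub>R tvec m B x - tvec m A x)"
    unfolding eq nonneg_def using gle pos m
    by (auto simp: divide_nonpos_pos mult_nonneg_nonpos less_imp_le)
  moreover have "x \<bullet> (lam m A B x *\<^sub>R tvec m B x - tvec m A x) = 0"
    unfolding lam_def using pos by (simp add: inner_diff_right tform_def[symmetric])
  ultimately show ?thesis unfolding teicp_sol_def using xn xnz by simp
qed



lemma armijo_uniform:
  fixes \<rho> Bmax :: real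
  assumes sA: "sym_tensor m A" and sB: "sym_tensor m B" and pd: "pos_def_tensor m B"
    and r0: "0 < \<rho>" and r1: "\<rho> < 1" and Bp: "0 < Bmax"
  shows "\<exists>abar>0. \<forall>(x::real^'n::finite)\<in>XX. \<forall>\<beta> z \<alpha>. 0 < \<beta> \<longrightarrow> \<beta> \<le> Bmax \<longrightarrow> z \<in> Omega \<longrightarrow>
     (\<forall>w\<in>Omega. (x + \<beta> *\<^sub>R grad m A B x) \<bullet> w \<le> (x + \<beta> *\<^sub>R grad m A B x) \<bullet> z) \<longrightarrow>
     0 < \<alpha> \<longrightarrow> \<alpha> \<le> abar \<longrightarrow>
     lam m A B (x + \<alpha> *\<^sub>R (z - x)) \<ge> lam m A B x + \<rho> * \<alpha> * (grad m A B x \<bullet> (z - x))"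
proof -
  have m: "m \<noteq> 0" by (rule m_pos[OF pd])
  obtain K M where K: "K \<ge> 0"
    "\<And>x y. x\<in>XX \<Longrightarrow> y\<in>XX \<Longrightarrow> norm (grad m A B x - grad m A B (y::real^'n)) \<le> K * norm (x - y)"
    using blipE[OF blip_grad[OF pd]] by metis
  obtain Nm where Nm: "Nm > 0" "\<forall>x\<in>(XX::(real^'n) set). Nm \<le> norm x" using norm_lower by blast
  define N0 where "N0 = min Nm 1"
  have N0: "0 < N0" "N0 \<le> 1" "\<And>x::real^'n. x \<in> XX \<Longrightarrow> N0 \<le> norm x"
    using Nm unfolding N0_def by auto
  define c0 where "c0 = N0^2 / (2 * Bmax)"
  have c0: "c0 > 0" using N0 Bp unfolding c0_def by simp
  define \<epsilon> where "\<epsilon> = (1 - \<rho>) / 2"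
  have eps: "0 < \<epsilon>" "\<epsilon> < 1" using r0 r1 unfolding \<epsilon>_def by auto
  define abar where "abar = min (N0 * \<epsilon>) (N0 * c0 * \<epsilon> / (K + 1))"
  have abar: "abar > 0" using N0 c0 eps K unfolding abar_def by simp
  show ?thesis
  proof (rule exI[of _ abar], intro conjI abar ballI allI impI)
    fix x :: "real^'n" and \<beta> \<alpha> :: real and z :: "real^'n"
    assume x: "x \<in> XX" and b0: "0 < \<beta>" and b1: "\<beta> \<le> Bmax" and z: "z \<in> Omega"
      and mx: "\<forall>w\<in>Omega. (x + \<beta> *\<^sub>R grad m A B x) \<bullet> w \<le> (x + \<beta> *\<^sub>R grad m A B x) \<bullet> z"
      and a0: "0 < \<alpha>" and a1: "\<alpha> \<le> abar"
    let ?g = "grad m A B"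
    define N where "N = norm x"
    have N: "N0 \<le> N" "N \<le> 1" "0 < N" using N0(3)[OF x] x N0(1) unfolding N_def XX_def by auto
    define u where "u = (1/N) *\<^sub>R x"
    have xu: "x = N *\<^sub>R u" unfolding u_def using N by simp
    have uu: "u \<bullet> u = 1" unfolding u_def N_def using N
      by (simp add: N_def power2_norm_eq_inner[symmetric] power2_eq_square)
    have un: "nonneg u" using x N unfolding u_def XX_def nonneg_def by auto
    have uO: "u \<in> Omega" using uu un unfolding Omega_def by simp
    have zz: "z \<bullet> z = 1" using z unfolding Omega_def by simp
    have gx: "?g x \<bullet> x = 0" using euler[of x m A B] by (simp add: inner_commute)
    have gu0: "?g x \<bullet> u = 0" unfolding u_def using gx by simp
    have xun: "x \<bullet> u = N" unfolding xu using uu by simp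
    define e where "e = z - u"
    have ee: "e \<bullet> e = 2 - 2 * (u \<bullet> z)" unfolding e_def using uu zz
      by (simp add: inner_diff_left inner_diff_right inner_commute)
    have "(x + \<beta> *\<^sub>R ?g x) \<bullet> u \<le> (x + \<beta> *\<^sub>R ?g x) \<bullet> z" using mx uO by blast
    then have "N \<le> x \<bullet> z + \<beta> * (?g x \<bullet> z)" using xun gu0 by (simp add: inner_add_left)
    moreover have "x \<bullet> z = N * (u \<bullet> z)" unfolding xu by simp
    ultimately have bgz: "\<beta> * (?g x \<bullet> z) \<ge> N * (e \<bullet> e) / 2" unfolding ee by (simp add: algebra_simps)
    have gscale: "?g u = N *\<^sub>R ?g x"
      unfolding u_def using grad_scale[OF m, of "1/N" A B x] N by simp
    define G where "G = ?g u \<bullet> e"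
    have Gz: "G = N * (?g x \<bullet> z)" unfolding G_def gscale e_def using gu0 by (simp add: inner_diff_right)
    have gdir: "?g x \<bullet> (z - x) = G / N" unfolding Gz using N gx by (simp add: inner_diff_right)
    have ee0: "e \<bullet> e \<ge> 0" by simp
    have "0 \<le> N * (e \<bullet> e) / 2" using N ee0 by simp
    then have "0 \<le> \<beta> * (?g x \<bullet> z)" using bgz by linarith
    then have "0 \<le> ?g x \<bullet> z" using b0 by (simp add: zero_le_mult_iff)
    then have G0: "G \<ge> 0" unfolding Gz using N by simp
    have Gc: "c0 * (e \<bullet> e) \<le> G"
    proof -
      have "N * (e \<bullet> e) / 2 \<le> \<beta> * (?g x \<bullet> z)" by (rule bgz)
      then have "N * (N * (e \<bullet> e) / 2) \<le> N * (\<beta> * (?g x \<bullet> z))" using N by (simp add: mult_left_mono)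
      then have "N^2 * (e \<bullet> e) / 2 \<le> \<beta> * G" unfolding Gz by (simp add: power2_eq_square algebra_simps)
      moreover have "N0^2 * (e \<bullet> e) / 2 \<le> N^2 * (e \<bullet> e) / 2"
        using N ee0 N0(1) by (intro divide_right_mono mult_right_mono power_mono) auto
      moreover have "\<beta> * G \<le> Bmax * G" using b1 G0 by (simp add: mult_right_mono)
      ultimately have "N0^2 * (e \<bullet> e) / 2 \<le> Bmax * G" by linarith
      then show ?thesis unfolding c0_def using Bp by (simp add: field_simps)
    qed
    define D where "D = (1 - \<alpha>) * N + \<alpha>"
    have abarle: "abar \<le> N0 * \<epsilon>" "abar \<le> N0 * c0 * \<epsilon> / (K + 1)" unfolding abar_def by auto
    have a1': "\<alpha> \<le> 1" using a1 abarle(1) N0 eps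
      by (smt (verit) mult_le_one less_imp_le)
    have h1: "0 \<le> \<alpha> * (1 - N)" using a0 N by simp
    have h2: "0 \<le> \<alpha> * N" using a0 N by simp
    have D: "N \<le> D" "D \<le> N + \<alpha>" "0 < D" unfolding D_def using h1 h2 N
      by (auto simp: algebra_simps)
    define s where "s = \<alpha> / D"
    have s0: "0 < s" unfolding s_def using a0 D by simp
    have s1: "s \<le> \<alpha> / N" unfolding s_def using a0 D N by (intro divide_left_mono) auto
    have s2: "\<alpha> / (N + \<alpha>) \<le> s" unfolding s_def using a0 D N by (intro divide_left_mono) auto
    have sle1: "s \<le> 1" unfolding s_def using D a0 D_def N a1'
      by (simp add: divide_le_eq)
    have step: "x + \<alpha> *\<^sub>R (z - x) = D *\<^sub>R (u + s *\<^sub>R e)"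
    proof -
      have Ds: "D * s = \<alpha>" unfolding s_def using D(3) by simp
      have "D *\<^sub>R (u + s *\<^sub>R e) = D *\<^sub>R u + (D * s) *\<^sub>R e" by (simp add: scaleR_add_right)
      also have "\<dots> = D *\<^sub>R u + \<alpha> *\<^sub>R e" unfolding Ds ..
      also have "\<dots> = x + \<alpha> *\<^sub>R (z - x)" unfolding e_def D_def xu by (simp add: algebra_simps)
      finally show ?thesis by simp
    qed
    have lamstep: "lam m A B (x + \<alpha> *\<^sub>R (z - x)) = lam m A B (u + s *\<^sub>R e)"
      unfolding step by (rule lam_scale[OF m]) (use D in simp)
    have lamx: "lam m A B x = lam m A B u" unfolding xu by (rule lam_scale[OF m]) (use N in simp)
    have seg: "u + t *\<^sub>R e \<in> XX" if "0 \<le> t" "t \<le> 1" for t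
    proof -
      have "u + t *\<^sub>R e = (1 - t) *\<^sub>R u + t *\<^sub>R z" unfolding e_def by (simp add: algebra_simps)
      moreover have "u \<in> XX" "z \<in> XX" using uO z Omega_XX by auto
      ultimately show ?thesis using XX_convex that unfolding convex_def by auto
    qed
    have "\<exists>\<xi>>0. \<xi> < s \<and> lam m A B (u + s *\<^sub>R e) - lam m A B (u + 0 *\<^sub>R e) = (s - 0) * (?g (u + \<xi> *\<^sub>R e) \<bullet> e)"
    proof (rule MVT2[OF s0])
      fix t assume "0 \<le> t" "t \<le> s"
      then have "u + t *\<^sub>R e \<in> XX" using seg sle1 by auto
      then show "((\<lambda>t. lam m A B (u + t *\<^sub>R e)) has_real_derivative (?g (u + t *\<^sub>R e) \<bullet> e)) (at t)"
        by (intro lam_deriv[OF sA sB pd] XX_nz)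
    qed
    then obtain \<xi> where xi: "0 < \<xi>" "\<xi> < s"
      and mvt: "lam m A B (u + s *\<^sub>R e) - lam m A B u = s * (?g (u + \<xi> *\<^sub>R e) \<bullet> e)" by auto
    have uxi: "u + \<xi> *\<^sub>R e \<in> XX" using seg xi sle1 by auto
    have uX: "u \<in> XX" using uO Omega_XX by auto
    have "norm (?g (u + \<xi> *\<^sub>R e) - ?g u) \<le> K * norm (\<xi> *\<^sub>R e)"
      using K(2)[OF uxi uX] by simp
    also have "\<dots> \<le> K * (s * norm e)"
    proof -
      have "norm (\<xi> *\<^sub>R e) = \<xi> * norm e" using xi by simp
      also have "\<dots> \<le> s * norm e" using less_imp_le[OF xi(2)] by (rule mult_right_mono) simp
      finally show ?thesis using K by (simp add: mult_left_mono)
    qed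
    finally have lip: "norm (?g (u + \<xi> *\<^sub>R e) - ?g u) \<le> K * s * norm e" by simp
    have "\<bar>(?g (u + \<xi> *\<^sub>R e) - ?g u) \<bullet> e\<bar> \<le> norm (?g (u + \<xi> *\<^sub>R e) - ?g u) * norm e"
      by (rule Cauchy_Schwarz_ineq2)
    also have "\<dots> \<le> K * s * norm e * norm e" using lip by (simp add: mult_right_mono)
    also have "\<dots> = K * s * (e \<bullet> e)" by (simp add: power2_norm_eq_inner[symmetric] power2_eq_square)
    finally have "?g (u + \<xi> *\<^sub>R e) \<bullet> e \<ge> G - K * s * (e \<bullet> e)"
      unfolding G_def by (simp add: inner_diff_left)
    moreover have "K * s * (e \<bullet> e) \<le> K * s * (G / c0)"
      using Gc c0 K s0 by (intro mult_left_mono) (auto simp: field_simps)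
    ultimately have gxi: "?g (u + \<xi> *\<^sub>R e) \<bullet> e \<ge> G * (1 - K * s / c0)" by (simp add: algebra_simps)
    have Ks: "K * s / c0 \<le> \<epsilon>"
    proof -
      have "K * s / c0 \<le> K * (\<alpha> / N0) / c0"
      proof -
        have "s \<le> \<alpha> / N0" using s1 N a0 N0 by (meson order_trans divide_left_mono less_imp_le mult_pos_pos)
        then show ?thesis using K c0 by (intro divide_right_mono mult_left_mono) auto
      qed
      also have "\<dots> \<le> K * ((N0 * c0 * \<epsilon> / (K + 1)) / N0) / c0"
        using a1 abarle(2) K c0 N0 by (intro divide_right_mono mult_left_mono) auto
      also have "\<dots> = \<epsilon> * (K / (K + 1))"
      proof -
        have "(N0 * c0 * \<epsilon> / (K + 1)) / N0 = c0 * \<epsilon> / (K + 1)" using N0(1) by simp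
        then show ?thesis using c0 by simp
      qed
      also have "\<dots> \<le> \<epsilon>"
      proof -
        have "K / (K + 1) \<le> 1" using K by simp
        then show ?thesis using eps(1) by (metis less_imp_le mult.right_neutral mult_left_mono)
      qed
      finally show ?thesis .
    qed
    have key: "s * (1 - K * s / c0) \<ge> \<rho> * \<alpha> / N"
    proof -
      have "\<alpha> / (N + \<alpha>) * (1 - \<epsilon>) \<le> s * (1 - K * s / c0)"
        using s2 Ks eps s0 a0 N by (intro mult_mono) auto
      moreover have "\<rho> * \<alpha> / N \<le> \<alpha> / (N + \<alpha>) * (1 - \<epsilon>)"
      proof -
        have "N0 * \<epsilon> \<le> N * \<epsilon>" using N eps by (simp add: mult_right_mono)
        then have aNe: "\<alpha> \<le> N * \<epsilon>" using a1 abarle(1) by linarith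
        have e1: "1 - \<epsilon> = \<rho> + \<epsilon>" unfolding \<epsilon>_def by (simp add: field_simps)
        have q1: "\<rho> * (\<alpha> * \<alpha>) \<le> 1 * (\<alpha> * \<alpha>)" by (rule mult_right_mono) (use r1 in auto)
        have q2: "\<alpha> * \<alpha> \<le> \<alpha> * (N * \<epsilon>)" using aNe a0 by (simp add: mult_left_mono)
        have q3: "\<rho> * \<alpha> * (N + \<alpha>) = \<rho> * \<alpha> * N + \<rho> * (\<alpha> * \<alpha>)" by (simp add: algebra_simps)
        have q4: "\<alpha> * (1 - \<epsilon>) * N = \<rho> * \<alpha> * N + \<alpha> * (N * \<epsilon>)" by (simp add: e1 algebra_simps)
        have "\<rho> * \<alpha> * (N + \<alpha>) \<le> \<alpha> * (1 - \<epsilon>) * N" using q1 q2 q3 q4 by linarith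
        moreover have "0 < N + \<alpha>" using N a0 by simp
        ultimately show ?thesis using N(3) by (simp add: field_simps)
      qed
      ultimately show ?thesis by linarith
    qed
    have "lam m A B (x + \<alpha> *\<^sub>R (z - x)) - lam m A B x = s * (?g (u + \<xi> *\<^sub>R e) \<bullet> e)"
      using mvt lamstep lamx by simp
    also have "\<dots> \<ge> s * (G * (1 - K * s / c0))" using gxi s0 by (simp add: mult_left_mono)
    moreover have "s * (G * (1 - K * s / c0)) = G * (s * (1 - K * s / c0))" by simp
    moreover have "G * (s * (1 - K * s / c0)) \<ge> G * (\<rho> * \<alpha> / N)" using mult_left_mono[OF key G0] by simp
    moreover have "G * (\<rho> * \<alpha> / N) = \<rho> * \<alpha> * (?g x \<bullet> (z - x))" unfolding gdir by simp
    ultimately show "lam m A B (x + \<alpha> *\<^sub>R (z - x)) \<ge> lam m A B x + \<rho> * \<alpha> * (?g x \<bullet> (z - x))"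
      by linarith
  qed
qed



lemma beta_next_bounds:
  "bmin \<le> bmax \<Longrightarrow> bmin \<le> spg_beta_next bmin bmax s y \<and> spg_beta_next bmin bmax s y \<le> bmax"
  unfolding spg_beta_next_def by auto

lemma proj_ineq:
  fixes x g z :: "real^'n::finite"
  assumes xn: "nonneg x" and xnz: "x \<noteq> 0" and z: "z \<in> Omega" and gx: "g \<bullet> x = 0"
    and mx: "\<forall>w\<in>Omega. (x + \<beta> *\<^sub>R g) \<bullet> w \<le> (x + \<beta> *\<^sub>R g) \<bullet> z"
  shows "norm x \<le> x \<bullet> z + \<beta> * (g \<bullet> z)" and "x \<bullet> z \<le> norm x"
proof -
  define u where "u = (1 / norm x) *\<^sub>R x"
  have nx: "norm x > 0" using xnz by simp
  have "u \<bullet> u = 1" unfolding u_def using nx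
    by (simp add: power2_norm_eq_inner[symmetric] power2_eq_square)
  moreover have "nonneg u" using xn nx unfolding u_def nonneg_def by auto
  ultimately have uO: "u \<in> Omega" unfolding Omega_def by simp
  have eq: "(x + \<beta> *\<^sub>R g) \<bullet> u = norm x" unfolding u_def using nx gx
    by (simp add: inner_add_left power2_norm_eq_inner[symmetric] power2_eq_square)
  have "(x + \<beta> *\<^sub>R g) \<bullet> u \<le> (x + \<beta> *\<^sub>R g) \<bullet> z" using mx uO by blast
  then have "norm x \<le> (x + \<beta> *\<^sub>R g) \<bullet> z" using eq by linarith
  also have "(x + \<beta> *\<^sub>R g) \<bullet> z = x \<bullet> z + \<beta> * (g \<bullet> z)" by (simp add: inner_add_left)
  finally show "norm x \<le> x \<bullet> z + \<beta> * (g \<bullet> z)" .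
  have "x \<bullet> z \<le> norm x * norm z" by (rule norm_cauchy_schwarz)
  then show "x \<bullet> z \<le> norm x" using norm_Omega[OF z] by simp
qed

lemma contr_zero:
  fixes q e :: "nat \<Rightarrow> real"
  assumes q0: "\<And>k. 0 \<le> q k" and qQ: "\<And>k. q k \<le> Q" and c0: "0 \<le> c" and c1: "c < 1"
    and rec: "\<And>k. q (Suc k) \<le> c * q k + e k" and e: "e \<longlonglongrightarrow> 0"
  shows "q \<longlonglongrightarrow> 0"
proof (rule LIMSEQ_I)
  fix r :: real assume r: "0 < r"
  define \<epsilon> where "\<epsilon> = r / 2"
  have eps: "\<epsilon> > 0" using r unfolding \<epsilon>_def by simp
  have "\<epsilon> * (1 - c) > 0" using eps c1 by simp
  then obtain K where K: "\<And>k. k \<ge> K \<Longrightarrow> norm (e k - 0) < \<epsilon> * (1 - c)"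
    using LIMSEQ_D[OF e] by blast
  have claim: "q (K + n) \<le> \<epsilon> + c^n * Q" for n
  proof (induction n)
    case 0 then show ?case using qQ[of K] eps by simp
  next
    case (Suc n)
    have "q (K + Suc n) \<le> c * q (K + n) + e (K + n)" using rec[of "K+n"] by simp
    also have "\<dots> \<le> c * (\<epsilon> + c^n * Q) + \<epsilon> * (1 - c)"
    proof -
      have ek: "e (K+n) < \<epsilon> * (1 - c)" using K[of "K+n"] by simp
      have "c * q (K + n) \<le> c * (\<epsilon> + c^n * Q)" using Suc.IH c0 by (rule mult_left_mono)
      then show ?thesis using ek by linarith
    qed
    also have "\<dots> = \<epsilon> + c^(Suc n) * Q" by (simp add: algebra_simps)
    finally show ?case .
  qed
  have Q0: "0 \<le> Q" using q0[of 0] qQ[of 0] by simp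
  have "(\<lambda>n. c^n * Q) \<longlonglongrightarrow> 0 * Q"
    by (intro tendsto_mult tendsto_const LIMSEQ_power_zero) (use c0 c1 in simp)
  then obtain N1 where N1: "\<And>n. n \<ge> N1 \<Longrightarrow> norm (c^n * Q - 0) < \<epsilon>"
    using LIMSEQ_D[of "\<lambda>n. c^n * Q" 0] eps by auto
  show "\<exists>no. \<forall>n\<ge>no. norm (q n - 0) < r"
  proof (intro exI allI impI)
    fix n assume n: "K + N1 \<le> n"
    define j where "j = n - K"
    have j: "n = K + j" "N1 \<le> j" using n unfolding j_def by auto
    have "q n \<le> \<epsilon> + c^j * Q" using claim[of j] j by simp
    moreover have "c^j * Q < \<epsilon>" using N1[OF j(2)] c0 Q0 by simp
    ultimately show "norm (q n - 0) < r" using q0[of n] unfolding \<epsilon>_def by simp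
  qed
qed



theorem theorem1:
  fixes m :: nat and A B :: "'n::finite list \<Rightarrow> real"
    and P :: "real^'n \<Rightarrow> real^'n"
    and \<rho> bmin bmax :: real and x :: "nat \<Rightarrow> real^'n" and \<beta> :: "nat \<Rightarrow> real"
  assumes "sym_tensor m A" and "sym_tensor m B" and "pos_def_tensor m B"
    and "is_proj_Omega P"
    and "0 < \<rho>" and "\<rho> < 1" and "0 < bmin" and "bmin \<le> bmax"
    and "spg1_run m A B P \<rho> bmin bmax x \<beta>"
  shows "(\<forall>k. (\<forall>i<k. spg_d m A B P (x i) (\<beta> i) \<noteq> 0) \<and> spg_d m A B P (x k) (\<beta> k) = 0
              \<longrightarrow> teicp_sol m A B (lam m A B (x k)) (x k))
       \<and> ((\<forall>k. spg_d m A B P (x k) (\<beta> k) \<noteq> 0) \<longrightarrow>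
            (\<forall>xs r. strict_mono r \<and> (x \<circ> r) \<longlonglongrightarrow> xs \<longrightarrow>
                constrained_stationary m A B xs \<and> teicp_sol m A B (lam m A B xs) xs)
          \<and> (\<exists>l. pareto_eigenvalue m A B l \<and> (\<lambda>k. lam m A B (x k)) \<longlonglongrightarrow> l))"
proof -
  note sA = assms(1) and sB = assms(2) and pd = assms(3) and proj = assms(4)
    and r0 = assms(5) and r1 = assms(6) and bm0 = assms(7) and bm1 = assms(8) and run = assms(9)
  have m: "m \<noteq> 0" by (rule m_pos[OF pd])
  let ?g = "grad m A B"
  define z where "z = (\<lambda>k. P (x k + \<beta> k *\<^sub>R ?g (x k)))"
  have dz: "spg_d m A B P (x k) (\<beta> k) = z k - x k" for k unfolding spg_d_def z_def by simp
  have zO: "z k \<in> Omega" for k using proj unfolding is_proj_Omega_def z_def by blast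
  have zmax: "\<forall>w\<in>(Omega::(real^'n) set). (x k + \<beta> k *\<^sub>R ?g (x k)) \<bullet> w \<le> (x k + \<beta> k *\<^sub>R ?g (x k)) \<bullet> z k" for k
  proof
    fix w :: "real^'n" assume w: "w \<in> Omega"
    have "dist (x k + \<beta> k *\<^sub>R ?g (x k)) (z k) \<le> dist (x k + \<beta> k *\<^sub>R ?g (x k)) w"
      using proj w unfolding is_proj_Omega_def z_def by blast
    then show "(x k + \<beta> k *\<^sub>R ?g (x k)) \<bullet> w \<le> (x k + \<beta> k *\<^sub>R ?g (x k)) \<bullet> z k"
      by (rule proj_max[OF zO w])
  qed
  have x0O: "x 0 \<in> Omega" using run unfolding spg1_run_def by simp
  have b0: "\<beta> 0 = 1 / norm (?g (x 0))" using run unfolding spg1_run_def by simp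
  have runk: "\<forall>k. (\<forall>i\<le>k. spg_d m A B P (x i) (\<beta> i) \<noteq> 0) \<longrightarrow>
        (let d = spg_d m A B P (x k) (\<beta> k) in
          x (Suc k) = x k + spg_alpha m A B \<rho> (x k) d *\<^sub>R d \<and>
          \<beta> (Suc k) = spg_beta_next bmin bmax (x (Suc k) - x k)
                         (grad m A B (x (Suc k)) - grad m A B (x k)))"
    using run unfolding spg1_run_def by blast
  have recur: "x (Suc k) = x k + spg_alpha m A B \<rho> (x k) (z k - x k) *\<^sub>R (z k - x k) \<and>
      \<beta> (Suc k) = spg_beta_next bmin bmax (x (Suc k) - x k) (?g (x (Suc k)) - ?g (x k))"
    if "\<forall>i\<le>k. z i - x i \<noteq> 0" for k
    using runk that unfolding dz Let_def by blast
  have gx0: "?g y \<bullet> y = 0" for y using euler[of y m A B] by (simp add: inner_commute)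
  have bpos: "0 < \<beta> k \<or> ?g (x k) = 0" if "\<forall>i<k. z i - x i \<noteq> 0" for k
  proof (cases k)
    case 0
    then show ?thesis using b0 by (cases "?g (x 0) = 0") auto
  next
    case (Suc j)
    have "\<forall>i\<le>j. z i - x i \<noteq> 0" using that Suc by auto
    then have "\<beta> (Suc j) = spg_beta_next bmin bmax (x (Suc j) - x j) (?g (x (Suc j)) - ?g (x j))"
      using recur by blast
    then have "bmin \<le> \<beta> (Suc j)"
      using beta_next_bounds[OF bm1, of "x (Suc j) - x j" "?g (x (Suc j)) - ?g (x j)"] by simp
    then show ?thesis using Suc bm0 by simp
  qed
  have part1: "\<forall>k. (\<forall>i<k. spg_d m A B P (x i) (\<beta> i) \<noteq> 0) \<and> spg_d m A B P (x k) (\<beta> k) = 0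
              \<longrightarrow> teicp_sol m A B (lam m A B (x k)) (x k)"
  proof (intro allI impI)
    fix k assume H: "(\<forall>i<k. spg_d m A B P (x i) (\<beta> i) \<noteq> 0) \<and> spg_d m A B P (x k) (\<beta> k) = 0"
    then have zk: "z k = x k" and H1: "\<forall>i<k. z i - x i \<noteq> 0" unfolding dz by auto
    have xO: "x k \<in> Omega" using zO[of k] zk by simp
    have gle: "?g (x k) $ i \<le> 0" for i
    proof (cases "?g (x k) = 0")
      case True then show ?thesis by simp
    next
      case False
      then have bp: "0 < \<beta> k" using bpos[OF H1] by blast
      show ?thesis using kkt_lemma[OF xO bp gx0] zmax[of k] zk by simp
    qed
    have "x k \<noteq> 0" using norm_Omega[OF xO] by auto
    moreover have "nonneg (x k)" using xO unfolding Omega_def by simp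
    ultimately show "teicp_sol m A B (lam m A B (x k)) (x k)"
      using teicp_of_gle[OF pd] gle by blast
  qed
  have part2: "(\<forall>k. spg_d m A B P (x k) (\<beta> k) \<noteq> 0) \<longrightarrow>
            (\<forall>xs r. strict_mono r \<and> (x \<circ> r) \<longlonglongrightarrow> xs \<longrightarrow>
                constrained_stationary m A B xs \<and> teicp_sol m A B (lam m A B xs) xs)
          \<and> (\<exists>l. pareto_eigenvalue m A B l \<and> (\<lambda>k. lam m A B (x k)) \<longlonglongrightarrow> l)"
  proof (intro impI)
    assume H0: "\<forall>k. spg_d m A B P (x k) (\<beta> k) \<noteq> 0"
    then have H: "z k - x k \<noteq> 0" for k unfolding dz by blast
    define al where "al = (\<lambda>k. spg_alpha m A B \<rho> (x k) (z k - x k))"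
    have rec: "x (Suc k) = x k + al k *\<^sub>R (z k - x k)"
      "\<beta> (Suc k) = spg_beta_next bmin bmax (x (Suc k) - x k) (?g (x (Suc k)) - ?g (x k))" for k
      using recur[of k] H unfolding al_def by auto
    have g0: "?g (x 0) \<noteq> 0"
    proof
      assume g: "?g (x 0) = 0"
      have "dist (x 0) (P (x 0)) \<le> dist (x 0) (x 0)" using proj x0O unfolding is_proj_Omega_def by blast
      then have "P (x 0) = x 0" by simp
      then have "z 0 = x 0" unfolding z_def using g by simp
      then show False using H[of 0] by simp
    qed
    have b0p: "0 < \<beta> 0" using b0 g0 by simp
    define bl where "bl = min bmin (\<beta> 0)"
    define Bu where "Bu = max bmax (\<beta> 0)"
    have blp: "0 < bl" using bm0 b0p unfolding bl_def by simp
    have Bup: "0 < Bu" using b0p unfolding Bu_def by simp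
    have bb: "bl \<le> \<beta> k \<and> \<beta> k \<le> Bu" for k
    proof (cases k)
      case 0 then show ?thesis unfolding bl_def Bu_def by simp
    next
      case (Suc j)
      then show ?thesis
        using rec(2)[of j] beta_next_bounds[OF bm1, of "x (Suc j) - x j" "?g (x (Suc j)) - ?g (x j)"]
        unfolding bl_def Bu_def by auto
    qed
    have bpos': "0 < \<beta> k" for k using bb[of k] blp by simp
    obtain abar where abar: "abar > 0" and AU: "\<forall>(y::real^'n)\<in>XX. \<forall>\<beta> z \<alpha>. 0 < \<beta> \<longrightarrow> \<beta> \<le> Bu \<longrightarrow> z \<in> Omega \<longrightarrow>
     (\<forall>w\<in>Omega. (y + \<beta> *\<^sub>R ?g y) \<bullet> w \<le> (y + \<beta> *\<^sub>R ?g y) \<bullet> z) \<longrightarrow>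
     0 < \<alpha> \<longrightarrow> \<alpha> \<le> abar \<longrightarrow>
     lam m A B (y + \<alpha> *\<^sub>R (z - y)) \<ge> lam m A B y + \<rho> * \<alpha> * (?g y \<bullet> (z - y))"
      using armijo_uniform[OF sA sB pd r0 r1 Bup] by blast
    obtain j0 where j0: "(1/2::real)^j0 < abar" using real_arch_pow_inv[OF abar, of "1/2"] by auto
    define a0 where "a0 = (1/2::real)^j0"
    have a0p: "0 < a0" "a0 \<le> 1" unfolding a0_def by (simp_all add: power_le_one)
    have alb: "0 < al k" "al k \<le> 1" for k
      unfolding al_def spg_alpha_def by (simp_all add: power_le_one)
    have xX: "x k \<in> XX" for k
    proof (induction k)
      case 0 then show ?case using x0O Omega_XX by auto
    next
      case (Suc k)
      have "x (Suc k) = (1 - al k) *\<^sub>R x k + al k *\<^sub>R z k" unfolding rec(1) by (simp add: algebra_simps)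
      moreover have "z k \<in> XX" using zO Omega_XX by auto
      ultimately show ?case using XX_convex Suc alb[of k] unfolding convex_def by auto
    qed
    have ok0: "armijo_ok m A B \<rho> (x k) (z k - x k) j0" for k
    proof -
      have "lam m A B (x k + a0 *\<^sub>R (z k - x k)) \<ge> lam m A B (x k) + \<rho> * a0 * (?g (x k) \<bullet> (z k - x k))"
        using AU xX[of k] bpos'[of k] bb[of k] zO[of k] zmax[of k] a0p j0 unfolding a0_def by auto
      then show ?thesis unfolding armijo_ok_def a0_def by simp
    qed
    define jk where "jk = (\<lambda>k. LEAST j. armijo_ok m A B \<rho> (x k) (z k - x k) j)"
    have okjk: "armijo_ok m A B \<rho> (x k) (z k - x k) (jk k)" for k
      unfolding jk_def using ok0 by (rule LeastI)
    have jkle: "jk k \<le> j0" for k unfolding jk_def using ok0 by (rule Least_le)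
    have aljk: "al k = (1/2)^(jk k)" for k unfolding al_def jk_def spg_alpha_def by simp
    have alge: "a0 \<le> al k" for k unfolding aljk a0_def by (rule power_decreasing[OF jkle]) auto
    define gd where "gd = (\<lambda>k. ?g (x k) \<bullet> (z k - x k))"
    have gdz: "gd k = ?g (x k) \<bullet> z k" for k unfolding gd_def using gx0[of "x k"]
      by (simp add: inner_diff_right)
    have xnn: "nonneg (x k)" "x k \<noteq> 0" for k using xX[of k] XX_nz unfolding XX_def by auto
    have PI1: "norm (x k) \<le> x k \<bullet> z k + \<beta> k * gd k" for k
      using proj_ineq(1)[OF xnn(1) xnn(2) zO gx0 zmax] gdz by simp
    have PI2: "x k \<bullet> z k \<le> norm (x k)" for k
      using proj_ineq(2)[OF xnn(1) xnn(2) zO gx0 zmax] .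
    have gd0: "0 \<le> gd k" for k
    proof -
      have "0 \<le> \<beta> k * gd k" using PI1[of k] PI2[of k] by linarith
      then show ?thesis using bpos'[of k] by (simp add: zero_le_mult_iff)
    qed
    have incr: "lam m A B (x (Suc k)) \<ge> lam m A B (x k) + \<rho> * a0 * gd k" for k
    proof -
      have "lam m A B (x (Suc k)) \<ge> lam m A B (x k) + \<rho> * al k * gd k"
        using okjk[of k] unfolding armijo_ok_def rec(1) aljk gd_def by simp
      moreover have "\<rho> * a0 * gd k \<le> \<rho> * al k * gd k"
        using alge[of k] r0 gd0[of k] by (intro mult_right_mono mult_left_mono) auto
      ultimately show ?thesis by linarith
    qed
    obtain Kl Ml where Ml: "\<And>y. y \<in> XX \<Longrightarrow> norm (lam m A B y) \<le> Ml"
      using blipE[OF blip_lam[OF pd]] by metis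
    have inc: "incseq (\<lambda>k. lam m A B (x k))"
    proof (rule incseq_SucI)
      fix k show "lam m A B (x k) \<le> lam m A B (x (Suc k))"
        using incr[of k] r0 a0p gd0[of k] by (smt (verit) mult_nonneg_nonneg)
    qed
    obtain l where lconv: "(\<lambda>k. lam m A B (x k)) \<longlonglongrightarrow> l"
      using incseq_convergent[OF inc, of Ml] Ml xX by (metis abs_le_D1 real_norm_def)
    have gdlim: "gd \<longlonglongrightarrow> 0"
    proof (rule tendsto_sandwich[of "\<lambda>k. 0" gd sequentially "\<lambda>k. (lam m A B (x (Suc k)) - lam m A B (x k)) / (\<rho> * a0)"])
      show "\<forall>\<^sub>F k in sequentially. 0 \<le> gd k" using gd0 by simp
      have "\<forall>k. gd k \<le> (lam m A B (x (Suc k)) - lam m A B (x k)) / (\<rho> * a0)"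
      proof
        fix k
        have "\<rho> * a0 * gd k \<le> lam m A B (x (Suc k)) - lam m A B (x k)" using incr[of k] by linarith
        moreover have "0 < \<rho> * a0" using r0 a0p by simp
        ultimately show "gd k \<le> (lam m A B (x (Suc k)) - lam m A B (x k)) / (\<rho> * a0)"
          by (simp add: pos_le_divide_eq mult.commute)
      qed
      then show "\<forall>\<^sub>F k in sequentially. gd k \<le> (lam m A B (x (Suc k)) - lam m A B (x k)) / (\<rho> * a0)"
        by (simp add: always_eventually)
      show "(\<lambda>k. 0) \<longlonglongrightarrow> 0" by simp
      have "(\<lambda>k. (lam m A B (x (Suc k)) - lam m A B (x k)) / (\<rho> * a0)) \<longlonglongrightarrow> (l - l) / (\<rho> * a0)"
        by (intro tendsto_divide tendsto_diff LIMSEQ_Suc[OF lconv] lconv tendsto_const) (use r0 a0p in simp)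
      then show "(\<lambda>k. (lam m A B (x (Suc k)) - lam m A B (x k)) / (\<rho> * a0)) \<longlonglongrightarrow> 0" by simp
    qed
    define q where "q = (\<lambda>k. 1 - norm (x k))"
    have q0: "0 \<le> q k" "q k \<le> 1" for k using xX[of k] unfolding q_def XX_def by auto
    have qrec: "q (Suc k) \<le> (1 - a0) * q k + Bu * gd k" for k
    proof -
      let ?a = "al k" and ?N = "norm (x k)"
      have zz: "z k \<bullet> z k = 1" using zO[of k] unfolding Omega_def by simp
      have e1: "x (Suc k) \<bullet> z k = (1 - ?a) * (x k \<bullet> z k) + ?a"
        unfolding rec(1) using zz by (simp add: inner_add_left inner_diff_left algebra_simps)
      have e2: "x (Suc k) \<bullet> z k \<le> norm (x (Suc k))"
        using norm_cauchy_schwarz[of "x (Suc k)" "z k"] norm_Omega[OF zO[of k]] by simp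
      have e3: "(1 - ?a) * (?N - \<beta> k * gd k) \<le> (1 - ?a) * (x k \<bullet> z k)"
        using PI1[of k] alb[of k] by (intro mult_left_mono) auto
      have e4: "(1 - ?a) * (1 - ?N) \<le> (1 - a0) * (1 - ?N)"
        using alge[of k] q0[of k] unfolding q_def by (intro mult_right_mono) auto
      have e5: "(1 - ?a) * (\<beta> k * gd k) \<le> Bu * gd k"
      proof -
        have "(1 - ?a) * (\<beta> k * gd k) \<le> 1 * (\<beta> k * gd k)"
          using alb[of k] bpos'[of k] gd0[of k] by (intro mult_right_mono) auto
        also have "\<dots> \<le> Bu * gd k" using bb[of k] gd0[of k] by (simp add: mult_right_mono)
        finally show ?thesis .
      qed
      have "q (Suc k) = 1 - norm (x (Suc k))" unfolding q_def ..
      also have "\<dots> \<le> 1 - ((1 - ?a) * (?N - \<beta> k * gd k) + ?a)" using e1 e2 e3 by linarith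
      also have "\<dots> = (1 - ?a) * (1 - ?N) + (1 - ?a) * (\<beta> k * gd k)" by (simp add: algebra_simps)
      also have "\<dots> \<le> (1 - a0) * q k + Bu * gd k" using e4 e5 unfolding q_def by linarith
      finally show ?thesis .
    qed
    have qlim: "q \<longlonglongrightarrow> 0"
    proof (rule contr_zero[of q 1 "1 - a0" "\<lambda>k. Bu * gd k"])
      show "(\<lambda>k. Bu * gd k) \<longlonglongrightarrow> 0" using tendsto_mult_right_zero[OF gdlim] by simp
    qed (use q0 a0p qrec in auto)
    have nlim: "(\<lambda>k. norm (x k)) \<longlonglongrightarrow> 1"
    proof -
      have "(\<lambda>k. 1 - q k) \<longlonglongrightarrow> 1 - 0" by (intro tendsto_diff tendsto_const qlim)
      then show ?thesis unfolding q_def by simp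
    qed
    have zxlim: "(\<lambda>k. z k - x k) \<longlonglongrightarrow> 0"
    proof -
      define h where "h = (\<lambda>k. (q k)^2 + 2 * Bu * gd k)"
      have hlim: "h \<longlonglongrightarrow> 0^2 + 2 * Bu * 0" unfolding h_def
        by (intro tendsto_add tendsto_mult tendsto_const tendsto_power qlim gdlim)
      have bnd: "norm (z k - x k) \<le> sqrt (h k)" for k
      proof (rule real_le_rsqrt)
        have zz: "z k \<bullet> z k = 1" using zO[of k] unfolding Omega_def by simp
        have "(norm (z k - x k))^2 = 1 - 2 * (x k \<bullet> z k) + (norm (x k))^2"
          unfolding power2_norm_eq_inner using zz
          by (simp add: inner_diff_left inner_diff_right inner_commute power2_norm_eq_inner)
        also have "\<dots> \<le> 1 - 2 * (norm (x k) - \<beta> k * gd k) + (norm (x k))^2"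
        proof -
          have "norm (x k) - \<beta> k * gd k \<le> x k \<bullet> z k" using PI1[of k] by simp
          then show ?thesis by simp
        qed
        also have "\<dots> = (q k)^2 + 2 * (\<beta> k * gd k)" unfolding q_def by (simp add: power2_eq_square algebra_simps)
        also have "\<dots> \<le> h k" unfolding h_def using bb[of k] gd0[of k] by (simp add: mult_right_mono)
        finally show "(norm (z k - x k))^2 \<le> h k" .
      qed
      have "(\<lambda>k. norm (z k - x k)) \<longlonglongrightarrow> 0"
      proof (rule tendsto_sandwich[of "\<lambda>k. 0" _ sequentially "\<lambda>k. sqrt (h k)"])
        show "\<forall>\<^sub>F k in sequentially. 0 \<le> norm (z k - x k)" by simp
        show "\<forall>\<^sub>F k in sequentially. norm (z k - x k) \<le> sqrt (h k)" using bnd by simp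
        show "(\<lambda>k. 0) \<longlonglongrightarrow> 0" by simp
        show "(\<lambda>k. sqrt (h k)) \<longlonglongrightarrow> 0" using tendsto_real_sqrt[OF hlim] by simp
      qed
      then show ?thesis by (simp add: tendsto_norm_zero_iff)
    qed
    have accum: "constrained_stationary m A B xs \<and> teicp_sol m A B (lam m A B xs) xs"
      if r: "strict_mono r" and xr: "(x \<circ> r) \<longlonglongrightarrow> xs" for xs r
    proof -
      have xsX: "xs \<in> XX" using closed_sequentially[OF XX_closed _ xr] xX by simp
      have "(\<lambda>k. norm ((x \<circ> r) k)) \<longlonglongrightarrow> norm xs" by (intro tendsto_norm xr)
      moreover have "(\<lambda>k. norm ((x \<circ> r) k)) \<longlonglongrightarrow> 1"
        using LIMSEQ_subseq_LIMSEQ[OF nlim r] by (simp add: o_def)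
      ultimately have nxs: "norm xs = 1" using LIMSEQ_unique by blast
      have xsO: "xs \<in> Omega"
        using nxs xsX unfolding Omega_def XX_def by (simp add: power2_norm_eq_inner[symmetric])
      have "\<forall>n. (\<beta> \<circ> r) n \<in> {bl..Bu}" using bb by simp
      then obtain bs r2 where bs: "bs \<in> {bl..Bu}" and r2: "strict_mono r2" and br: "((\<beta> \<circ> r) \<circ> r2) \<longlonglongrightarrow> bs"
        using compact_Icc[of bl Bu] unfolding compact_def by blast
      define \<sigma> where "\<sigma> = r \<circ> r2"
      have sig: "strict_mono \<sigma>" unfolding \<sigma>_def using r r2 by (rule strict_mono_o)
      have xs_lim: "(\<lambda>k. x (\<sigma> k)) \<longlonglongrightarrow> xs"
        using LIMSEQ_subseq_LIMSEQ[OF xr r2] unfolding \<sigma>_def by (simp add: o_def)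
      have bs_lim: "(\<lambda>k. \<beta> (\<sigma> k)) \<longlonglongrightarrow> bs" using br unfolding \<sigma>_def by (simp add: o_def)
      have bsp: "0 < bs" using bs blp by simp
      have g_lim: "(\<lambda>k. ?g (x (\<sigma> k))) \<longlonglongrightarrow> ?g xs"
        using continuous_on_tendsto_compose[OF blip_cont[OF blip_grad[OF pd]] xs_lim xsX] xX by simp
      have zx_s: "(\<lambda>k. z (\<sigma> k) - x (\<sigma> k)) \<longlonglongrightarrow> 0"
        using LIMSEQ_subseq_LIMSEQ[OF zxlim sig] by (simp add: o_def)
      have z_lim: "(\<lambda>k. z (\<sigma> k)) \<longlonglongrightarrow> xs"
      proof -
        have "(\<lambda>k. x (\<sigma> k) + (z (\<sigma> k) - x (\<sigma> k))) \<longlonglongrightarrow> xs + 0" by (intro tendsto_add xs_lim zx_s)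
        then show ?thesis by simp
      qed
      have y_lim: "(\<lambda>k. x (\<sigma> k) + \<beta> (\<sigma> k) *\<^sub>R ?g (x (\<sigma> k))) \<longlonglongrightarrow> xs + bs *\<^sub>R ?g xs"
        by (intro tendsto_add tendsto_scaleR xs_lim bs_lim g_lim)
      have mxs: "\<forall>w\<in>Omega. (xs + bs *\<^sub>R ?g xs) \<bullet> w \<le> (xs + bs *\<^sub>R ?g xs) \<bullet> xs"
      proof
        fix w :: "real^'n" assume w: "w \<in> Omega"
        show "(xs + bs *\<^sub>R ?g xs) \<bullet> w \<le> (xs + bs *\<^sub>R ?g xs) \<bullet> xs"
        proof (rule LIMSEQ_le)
          show "(\<lambda>k. (x (\<sigma> k) + \<beta> (\<sigma> k) *\<^sub>R ?g (x (\<sigma> k))) \<bullet> w) \<longlonglongrightarrow> (xs + bs *\<^sub>R ?g xs) \<bullet> w"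
            by (intro tendsto_inner y_lim tendsto_const)
          show "(\<lambda>k. (x (\<sigma> k) + \<beta> (\<sigma> k) *\<^sub>R ?g (x (\<sigma> k))) \<bullet> z (\<sigma> k)) \<longlonglongrightarrow> (xs + bs *\<^sub>R ?g xs) \<bullet> xs"
            by (intro tendsto_inner y_lim z_lim)
          show "\<exists>N. \<forall>n\<ge>N. (x (\<sigma> n) + \<beta> (\<sigma> n) *\<^sub>R ?g (x (\<sigma> n))) \<bullet> w
                   \<le> (x (\<sigma> n) + \<beta> (\<sigma> n) *\<^sub>R ?g (x (\<sigma> n))) \<bullet> z (\<sigma> n)"
            using zmax w by blast
        qed
      qed
      have gle: "?g xs $ i \<le> 0" for i by (rule kkt_lemma[OF xsO bsp gx0 mxs])
      have cs: "constrained_stationary m A B xs"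
        unfolding constrained_stationary_def
      proof (intro conjI exI)
        show "xs \<in> Omega" by (rule xsO)
        show "?g xs + (2 * 0) *\<^sub>R xs + (- ?g xs) = 0" by simp
        show "nonneg (- ?g xs)" unfolding nonneg_def using gle by simp
        show "(- ?g xs) \<bullet> xs = 0" using gx0[of xs] by simp
      qed
      have "xs \<noteq> 0" using nxs by auto
      moreover have "nonneg xs" using xsO unfolding Omega_def by simp
      ultimately show ?thesis using cs teicp_of_gle[OF pd] gle by blast
    qed
    show "(\<forall>xs r. strict_mono r \<and> (x \<circ> r) \<longlonglongrightarrow> xs \<longrightarrow>
                constrained_stationary m A B xs \<and> teicp_sol m A B (lam m A B xs) xs)
          \<and> (\<exists>l. pareto_eigenvalue m A B l \<and> (\<lambda>k. lam m A B (x k)) \<longlonglongrightarrow> l)"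
    proof (rule conjI)
      show "\<forall>xs r. strict_mono r \<and> (x \<circ> r) \<longlonglongrightarrow> xs \<longrightarrow>
                constrained_stationary m A B xs \<and> teicp_sol m A B (lam m A B xs) xs"
        using accum by blast
    next
      obtain xs r where xsX: "xs \<in> XX" and r: "strict_mono r" and xr: "(x \<circ> r) \<longlonglongrightarrow> xs"
        using XX_compact xX unfolding compact_def by metis
      have ts: "teicp_sol m A B (lam m A B xs) xs" using accum[OF r xr] by blast
      have "(\<lambda>k. lam m A B ((x \<circ> r) k)) \<longlonglongrightarrow> lam m A B xs"
        using continuous_on_tendsto_compose[OF blip_cont[OF blip_lam[OF pd]] xr xsX] xX by simp
      moreover have "(\<lambda>k. lam m A B ((x \<circ> r) k)) \<longlonglongrightarrow> l"
        using LIMSEQ_subseq_LIMSEQ[OF lconv r] by (simp add: o_def)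
      ultimately have "l = lam m A B xs" using LIMSEQ_unique by blast
      then show "\<exists>l. pareto_eigenvalue m A B l \<and> (\<lambda>k. lam m A B (x k)) \<longlonglongrightarrow> l"
        using ts lconv unfolding pareto_eigenvalue_def by blast
    qed
  qed
  show ?thesis using part1 part2 by blast
qed


end
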